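(* Let $0<\epsilon<1/2$, let $C=1-h(\epsilon)$ with $h(\epsilon)=-\epsilon\log_2\epsilon-(1-\epsilon)\log_2(1-\epsilon)$, let $0<R<C$ and $0<\rho<1$ be fixed, and set $k=k(n)=\lfloor Rn\rfloor$. If $\mathbf{A}$ is a random $n\times k$ binary matrix with the Bernoulli$(n,k,\rho)$ distribution, then \[ \lim_{n\to\infty}\mathbb{E}_{\mathbf{A}}\big(p_c(\mathbf{A})\big)=1 . \]
   Context: All arithmetic on binary vectors and matrices is in $\mathrm{GF}(2)$. A binary linear code with generating matrix $\mathbf{A}\in\{0,1\}^{n\times k}$ encodes a message $X\in\{0,1\}^k$ as $\mathbf{A}X\in\{0,1\}^n$. Over the binary symmetric channel (BSC) with cross-over probability $\epsilon$, the channel output is $Y=\mathbf{A}X+N$, where $X$ is uniformly distributed on $\{0,1\}^k$ and $N\in\{0,1\}^n$ has i.i.d. Bernoulli$(\epsilon)$ entries, independent of $X$. The decoder, on receiving $Y=y$, outputs a random estimate $\hat X$ drawn from the posterior distribution $\mathbb{P}(X=\cdot\mid Y=y)$. Its probability of correct detection is $p_c(\mathbf{A})=\mathbb{E}_{X,Y}\big[\mathbb{P}(X\mid Y)\big]$, and $p_e(\mathbf{A})=1-p_c(\mathbf{A})$. The Bernoulli$(n,k,\rho)$ distribution on the set $\mathcal{A}_{n\times k}$ of binary $n\times k$ matrices is the one in which all entries are i.i.d. Bernoulli$(\rho)$. *)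

theory Defs
  imports Complex_Main
begin

text \<open>Binary vectors of length m are modelled as functions nat => bool vanishing
  outside {0..<m}; binary n x k matrices as nat => nat => bool vanishing outside
  {0..<n} x {0..<k}. True = 1, False = 0. Arithmetic is in GF(2).\<close>

definition bvecs :: "nat \<Rightarrow> (nat \<Rightarrow> bool) set" where
  "bvecs m = {x. \<forall>i. m \<le> i \<longrightarrow> x i = False}"

definition bmats :: "nat \<Rightarrow> nat \<Rightarrow> (nat \<Rightarrow> nat \<Rightarrow> bool) set" where
  "bmats n k = {A. \<forall>i j. (n \<le> i \<or> k \<le> j) \<longrightarrow> A i j = False}"

definition encode :: "nat \<Rightarrow> nat \<Rightarrow> (nat \<Rightarrow> nat \<Rightarrow> bool) \<Rightarrow> (nat \<Rightarrow> bool) \<Rightarrow> (nat \<Rightarrow> bool)" where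
  "encode n k A x = (\<lambda>i. i < n \<and> odd (card {j. j < k \<and> A i j \<and> x j}))"

definition hdist :: "nat \<Rightarrow> (nat \<Rightarrow> bool) \<Rightarrow> (nat \<Rightarrow> bool) \<Rightarrow> nat" where
  "hdist n u v = card {i. i < n \<and> u i \<noteq> v i}"

text \<open>BSC transition probability P(Y = y | X = x) = P(N = y + A x).\<close>
definition bsc_lik :: "real \<Rightarrow> nat \<Rightarrow> nat \<Rightarrow> (nat \<Rightarrow> nat \<Rightarrow> bool) \<Rightarrow> (nat \<Rightarrow> bool) \<Rightarrow> (nat \<Rightarrow> bool) \<Rightarrow> real" where
  "bsc_lik \<epsilon> n k A x y = \<epsilon> ^ hdist n y (encode n k A x) * (1 - \<epsilon>) ^ (n - hdist n y (encode n k A x))"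

text \<open>Joint law P(X = x, Y = y) with X uniform on {0,1}^k.\<close>
definition joint :: "real \<Rightarrow> nat \<Rightarrow> nat \<Rightarrow> (nat \<Rightarrow> nat \<Rightarrow> bool) \<Rightarrow> (nat \<Rightarrow> bool) \<Rightarrow> (nat \<Rightarrow> bool) \<Rightarrow> real" where
  "joint \<epsilon> n k A x y = bsc_lik \<epsilon> n k A x y / 2 ^ k"

definition out_prob :: "real \<Rightarrow> nat \<Rightarrow> nat \<Rightarrow> (nat \<Rightarrow> nat \<Rightarrow> bool) \<Rightarrow> (nat \<Rightarrow> bool) \<Rightarrow> real" where
  "out_prob \<epsilon> n k A y = (\<Sum>x\<in>bvecs k. joint \<epsilon> n k A x y)"

definition posterior :: "real \<Rightarrow> nat \<Rightarrow> nat \<Rightarrow> (nat \<Rightarrow> nat \<Rightarrow> bool) \<Rightarrow> (nat \<Rightarrow> bool) \<Rightarrow> (nat \<Rightarrow> bool) \<Rightarrow> real" where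
  "posterior \<epsilon> n k A x y = joint \<epsilon> n k A x y / out_prob \<epsilon> n k A y"

text \<open>p_c(A) = E_{X,Y}[P(X | Y)].\<close>
definition p_c :: "real \<Rightarrow> nat \<Rightarrow> nat \<Rightarrow> (nat \<Rightarrow> nat \<Rightarrow> bool) \<Rightarrow> real" where
  "p_c \<epsilon> n k A = (\<Sum>x\<in>bvecs k. \<Sum>y\<in>bvecs n. joint \<epsilon> n k A x y * posterior \<epsilon> n k A x y)"

definition bern_mat :: "real \<Rightarrow> nat \<Rightarrow> nat \<Rightarrow> (nat \<Rightarrow> nat \<Rightarrow> bool) \<Rightarrow> real" where
  "bern_mat \<rho> n k A = (let w = card {(i, j). i < n \<and> j < k \<and> A i j} in \<rho> ^ w * (1 - \<rho>) ^ (n * k - w))"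

definition expected_pc :: "real \<Rightarrow> real \<Rightarrow> nat \<Rightarrow> nat \<Rightarrow> real" where
  "expected_pc \<rho> \<epsilon> n k = (\<Sum>A\<in>bmats n k. bern_mat \<rho> n k A * p_c \<epsilon> n k A)"

definition bin_entropy :: "real \<Rightarrow> real" where
  "bin_entropy e = - e * log 2 e - (1 - e) * log 2 (1 - e)"

end

theory Submission
  imports Defs "HOL-Analysis.Convex" "HOL-Real_Asymp.Real_Asymp"
begin


definition fvecs :: "nat \<Rightarrow> 'a set \<Rightarrow> 'a \<Rightarrow> (nat \<Rightarrow> 'a) set" where
  "fvecs m V d = {x. (\<forall>i<m. x i \<in> V) \<and> (\<forall>i. m \<le> i \<longrightarrow> x i = d)}"

lemma fvecs_Suc: "fvecs (Suc m) V d = (\<lambda>(x,v). x(m:=v)) ` (fvecs m V d \<times> V)"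
proof (intro set_eqI iffI)
  fix y assume y: "y \<in> fvecs (Suc m) V d"
  have "(y(m:=d), y m) \<in> fvecs m V d \<times> V" using y by (auto simp: fvecs_def)
  moreover have "y = (\<lambda>(x,v). x(m:=v)) (y(m:=d), y m)" by simp
  ultimately show "y \<in> (\<lambda>(x,v). x(m:=v)) ` (fvecs m V d \<times> V)" by blast
next
  fix y assume "y \<in> (\<lambda>(x,v). x(m:=v)) ` (fvecs m V d \<times> V)"
  then show "y \<in> fvecs (Suc m) V d" by (auto simp: fvecs_def)
qed

lemma fvecs_inj: "inj_on (\<lambda>(x,v). x(m:=v)) (fvecs m V d \<times> V)"
proof (rule inj_onI, clarsimp)
  fix x v x' v' assume a: "x \<in> fvecs m V d" "x' \<in> fvecs m V d" "x(m := v) = x'(m := v')"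
  have "v = v'" using fun_cong[OF a(3), of m] by simp
  moreover have "x = x'"
  proof
    fix i show "x i = x' i"
      using fun_cong[OF a(3), of i] a(1,2) by (cases "i = m") (auto simp: fvecs_def)
  qed
  ultimately show "x = x' \<and> v = v'" by simp
qed

lemma fvecs_0: "fvecs 0 V d = {\<lambda>_. d}"
  by (auto simp: fvecs_def)

lemma finite_fvecs: "finite V \<Longrightarrow> finite (fvecs m V d)"
  by (induction m) (auto simp: fvecs_0 fvecs_Suc)

lemma sum_fvecs:
  fixes f :: "nat \<Rightarrow> 'a \<Rightarrow> real"
  assumes "finite V"
  shows "(\<Sum>x\<in>fvecs m V d. \<Prod>i<m. f i (x i)) = (\<Prod>i<m. \<Sum>v\<in>V. f i v)"
proof (induction m)
  case 0 then show ?case by (simp add: fvecs_0)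
next
  case (Suc m)
  have "(\<Sum>x\<in>fvecs (Suc m) V d. \<Prod>i<Suc m. f i (x i))
      = (\<Sum>p\<in>fvecs m V d \<times> V. \<Prod>i<Suc m. f i (((\<lambda>(x,v). x(m:=v)) p) i))"
    unfolding fvecs_Suc by (subst sum.reindex[OF fvecs_inj]) (simp add: comp_def)
  also have "\<dots> = (\<Sum>p\<in>fvecs m V d \<times> V. (\<Prod>i<m. f i (fst p i)) * f m (snd p))"
    by (intro sum.cong refl) (auto intro!: prod.cong simp: lessThan_Suc mult.commute)
  also have "\<dots> = (\<Sum>x\<in>fvecs m V d. \<Sum>v\<in>V. (\<Prod>i<m. f i (x i)) * f m v)"
    by (simp add: sum.cartesian_product split_def)
  also have "\<dots> = (\<Sum>x\<in>fvecs m V d. \<Prod>i<m. f i (x i)) * (\<Sum>v\<in>V. f m v)"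
    by (simp add: sum_product)
  finally show ?case using Suc by (simp add: lessThan_Suc mult.commute)
qed

lemma bvecs_fvecs: "bvecs m = fvecs m UNIV False"
  by (auto simp: bvecs_def fvecs_def)

lemma bmats_fvecs: "bmats n k = fvecs n (bvecs k) (\<lambda>_. False)"
  by (auto simp: bmats_def fvecs_def bvecs_def fun_eq_iff) (metis not_le)

lemma finite_bvecs[simp]: "finite (bvecs m)"
  by (simp add: bvecs_fvecs finite_fvecs)

lemma finite_bmats[simp]: "finite (bmats n k)"
  by (simp add: bmats_fvecs finite_fvecs)

lemma sum_bvecs: fixes f :: "nat \<Rightarrow> bool \<Rightarrow> real" shows "(\<Sum>x\<in>bvecs m. \<Prod>i<m. f i (x i)) = (\<Prod>i<m. f i False + f i True)"
  unfolding bvecs_fvecs by (subst sum_fvecs) (auto simp: UNIV_bool add.commute)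

lemma card_bvecs: "card (bvecs m) = 2 ^ m"
proof -
  have "real (card (bvecs m)) = (\<Sum>x\<in>bvecs m. \<Prod>i<m. (\<lambda>i b. 1::real) i (x i))" by simp
  also have "\<dots> = 2 ^ m" by (subst sum_bvecs) simp
  finally show ?thesis by (metis of_nat_eq_of_nat_power_cancel_iff of_nat_numeral)
qed

lemma sum_bmats: fixes f :: "nat \<Rightarrow> (nat \<Rightarrow> bool) \<Rightarrow> real" shows "(\<Sum>A\<in>bmats n k. \<Prod>i<n. f i (A i)) = (\<Prod>i<n. \<Sum>r\<in>bvecs k. f i r)"
  unfolding bmats_fvecs by (rule sum_fvecs) simp



definition om :: "real \<Rightarrow> bool \<Rightarrow> bool \<Rightarrow> real" where
  "om \<epsilon> b c = (if b = c then 1 - \<epsilon> else \<epsilon>)"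

definition Wc :: "real \<Rightarrow> nat \<Rightarrow> (nat \<Rightarrow> bool) \<Rightarrow> (nat \<Rightarrow> bool) \<Rightarrow> real" where
  "Wc \<epsilon> n y c = (\<Prod>i<n. om \<epsilon> (y i) (c i))"

definition parv :: "nat \<Rightarrow> (nat \<Rightarrow> bool) \<Rightarrow> (nat \<Rightarrow> bool) \<Rightarrow> bool" where
  "parv k r z = odd (card {j. j < k \<and> r j \<and> z j})"

definition bv :: "real \<Rightarrow> nat \<Rightarrow> (nat \<Rightarrow> bool) \<Rightarrow> real" where
  "bv \<rho> k r = (\<Prod>j<k. if r j then \<rho> else 1 - \<rho>)"

definition qz :: "real \<Rightarrow> nat \<Rightarrow> (nat \<Rightarrow> bool) \<Rightarrow> real" where
  "qz \<rho> k z = (\<Sum>r\<in>bvecs k. bv \<rho> k r * (if parv k r z then 1 else 0))"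

lemma prod_if_card:
  fixes a b :: real and n :: nat
  shows "(\<Prod>i<n. if P i then a else b) = a ^ card {i. i < n \<and> P i} * b ^ (n - card {i. i < n \<and> P i})"
proof -
  have c: "card {i. i < n \<and> P i} + card {i. i < n \<and> \<not> P i} = n"
  proof -
    have "{i. i < n \<and> P i} \<union> {i. i < n \<and> \<not> P i} = {..<n}" by auto
    then have "card ({i. i < n \<and> P i} \<union> {i. i < n \<and> \<not> P i}) = n" by simp
    moreover have "card ({i. i < n \<and> P i} \<union> {i. i < n \<and> \<not> P i}) = card {i. i < n \<and> P i} + card {i. i < n \<and> \<not> P i}"
      by (rule card_Un_disjoint) auto
    ultimately show ?thesis by simp
  qed
  have "(\<Prod>i<n. if P i then a else b) = (\<Prod>i\<in>{..<n} \<inter> {i. P i}. a) * (\<Prod>i\<in>{..<n} \<inter> - {i. P i}. b)"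
    by (rule prod.If_cases) simp
  also have "{..<n} \<inter> {i. P i} = {i. i < n \<and> P i}" by auto
  also have "{..<n} \<inter> - {i. P i} = {i. i < n \<and> \<not> P i}" by auto
  finally have "(\<Prod>i<n. if P i then a else b) = a ^ card {i. i < n \<and> P i} * b ^ card {i. i < n \<and> \<not> P i}" by simp
  moreover have "card {i. i < n \<and> \<not> P i} = n - card {i. i < n \<and> P i}" using c by linarith
  ultimately show ?thesis by simp
qed

lemma bsc_lik_W: "bsc_lik \<epsilon> n k A x y = Wc \<epsilon> n y (encode n k A x)"
proof -
  have "Wc \<epsilon> n y (encode n k A x) = (\<Prod>i<n. if y i \<noteq> encode n k A x i then \<epsilon> else 1 - \<epsilon>)"
    unfolding Wc_def om_def by (intro prod.cong) auto
  then show ?thesis unfolding bsc_lik_def hdist_def by (simp add: prod_if_card)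
qed

lemma bern_mat_prod: "bern_mat \<rho> n k A = (\<Prod>i<n. bv \<rho> k (A i))"
proof -
  let ?T = "{..<n} \<times> {..<k}"
  have e1: "{(i, j). i < n \<and> j < k \<and> A i j} = ?T \<inter> {p. A (fst p) (snd p)}" by auto
  have e2: "card (?T \<inter> - {p. A (fst p) (snd p)}) = n * k - card (?T \<inter> {p. A (fst p) (snd p)})"
  proof -
    have u: "?T = (?T \<inter> {p. A (fst p) (snd p)}) \<union> (?T \<inter> - {p. A (fst p) (snd p)})" by blast
    have "card ?T = card (?T \<inter> {p. A (fst p) (snd p)}) + card (?T \<inter> - {p. A (fst p) (snd p)})"
      by (subst u, rule card_Un_disjoint) auto
    then show ?thesis by (simp add: card_cartesian_product)
  qed
  have "(\<Prod>i<n. bv \<rho> k (A i)) = (\<Prod>p\<in>?T. if A (fst p) (snd p) then \<rho> else 1 - \<rho>)"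
    unfolding bv_def by (simp add: prod.cartesian_product split_def)
  also have "\<dots> = (\<Prod>p\<in>?T \<inter> {p. A (fst p) (snd p)}. \<rho>) * (\<Prod>p\<in>?T \<inter> - {p. A (fst p) (snd p)}. 1 - \<rho>)"
    by (rule prod.If_cases) simp
  finally show ?thesis unfolding bern_mat_def Let_def e1 using e2 by simp
qed

lemma sum_bv: "(\<Sum>r\<in>bvecs k. bv \<rho> k r) = 1"
  unfolding bv_def by (subst sum_bvecs) simp

lemma sum_bern: "(\<Sum>A\<in>bmats n k. bern_mat \<rho> n k A) = 1"
  unfolding bern_mat_prod by (subst sum_bmats) (simp add: sum_bv)

lemma sum_Wc: "(\<Sum>y\<in>bvecs n. Wc \<epsilon> n y c) = 1"
  unfolding Wc_def by (subst sum_bvecs) (simp add: om_def; intro prod.neutral; auto)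

lemma neg1_card: fixes k :: nat shows "(-1::real) ^ card {j. j < k \<and> P j} = (\<Prod>j<k. if P j then -1 else 1)"
  using prod_if_card[of P "-1::real" 1 k] by simp

lemma neg1_pow: "(-1::real) ^ c = 1 - 2 * (if odd c then 1 else 0)"
  by simp

lemma q_formula: "1 - 2 * qz \<rho> k z = (1 - 2 * \<rho>) ^ card {j. j < k \<and> z j}"
proof -
  have "(\<Sum>r\<in>bvecs k. bv \<rho> k r * (-1) ^ card {j. j < k \<and> r j \<and> z j})
      = (\<Sum>r\<in>bvecs k. \<Prod>j<k. (if r j then \<rho> else 1 - \<rho>) * (if r j \<and> z j then -1 else 1))"
    unfolding bv_def neg1_card by (simp add: prod.distrib)
  also have "\<dots> = (\<Prod>j<k. if z j then 1 - 2 * \<rho> else 1)"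
    by (subst sum_bvecs) (auto intro!: prod.cong)
  also have "\<dots> = (1 - 2 * \<rho>) ^ card {j. j < k \<and> z j}"
    by (simp add: prod_if_card)
  finally have 1: "(\<Sum>r\<in>bvecs k. bv \<rho> k r * (-1) ^ card {j. j < k \<and> r j \<and> z j}) = (1 - 2 * \<rho>) ^ card {j. j < k \<and> z j}" .
  have "(\<Sum>r\<in>bvecs k. bv \<rho> k r * (-1) ^ card {j. j < k \<and> r j \<and> z j})
     = (\<Sum>r\<in>bvecs k. bv \<rho> k r) - 2 * qz \<rho> k z"
    unfolding qz_def parv_def neg1_pow
    by (simp add: algebra_simps sum_subtractf sum_distrib_left)
  with 1 show ?thesis by (simp add: sum_bv)
qed

lemma expect_rows:
  fixes g :: "nat \<Rightarrow> bool \<Rightarrow> real"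
  shows "(\<Sum>A\<in>bmats n k. bern_mat \<rho> n k A * (\<Prod>i<n. g i (parv k (A i) z)))
     = (\<Prod>i<n. (1 - qz \<rho> k z) * g i False + qz \<rho> k z * g i True)"
proof -
  have "(\<Sum>A\<in>bmats n k. bern_mat \<rho> n k A * (\<Prod>i<n. g i (parv k (A i) z)))
      = (\<Sum>A\<in>bmats n k. \<Prod>i<n. bv \<rho> k (A i) * g i (parv k (A i) z))"
    by (simp add: bern_mat_prod prod.distrib)
  also have "\<dots> = (\<Prod>i<n. \<Sum>r\<in>bvecs k. bv \<rho> k r * g i (parv k r z))"
    by (rule sum_bmats)
  also have "\<dots> = (\<Prod>i<n. (1 - qz \<rho> k z) * g i False + qz \<rho> k z * g i True)"
  proof (rule prod.cong[OF refl])
    fix i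
    have "(\<Sum>r\<in>bvecs k. bv \<rho> k r * g i (parv k r z))
        = (\<Sum>r\<in>bvecs k. bv \<rho> k r * g i False + (g i True - g i False) * (bv \<rho> k r * (if parv k r z then 1 else 0)))"
      by (intro sum.cong) (auto simp: algebra_simps)
    also have "\<dots> = g i False + (g i True - g i False) * qz \<rho> k z"
      by (simp add: sum.distrib sum_distrib_left[symmetric] sum_distrib_right[symmetric] sum_bv qz_def)
    finally show "(\<Sum>r\<in>bvecs k. bv \<rho> k r * g i (parv k r z)) = (1 - qz \<rho> k z) * g i False + qz \<rho> k z * g i True"
      by (simp add: algebra_simps)
  qed
  finally show ?thesis .
qed



definition xorv :: "(nat \<Rightarrow> bool) \<Rightarrow> (nat \<Rightarrow> bool) \<Rightarrow> (nat \<Rightarrow> bool)" where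
  "xorv u v = (\<lambda>i. u i \<noteq> v i)"

definition zv :: "nat \<Rightarrow> bool" where "zv = (\<lambda>_. False)"

lemma neg1_pow': "(-1::real) ^ c = (if odd c then -1 else 1)"
  by simp

lemma parv_xor: "parv k r (xorv x z) = (parv k r x \<noteq> parv k r z)"
proof -
  have "(-1::real) ^ card {j. j < k \<and> r j \<and> xorv x z j}
      = (-1::real) ^ card {j. j < k \<and> r j \<and> x j} * (-1::real) ^ card {j. j < k \<and> r j \<and> z j}"
    unfolding neg1_card prod.distrib[symmetric] by (intro prod.cong) (auto simp: xorv_def)
  then show ?thesis unfolding parv_def neg1_pow' by (auto split: if_splits)
qed

lemma encode_xor: "i < n \<Longrightarrow> encode n k A (xorv x z) i = (encode n k A x i \<noteq> encode n k A z i)"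
  unfolding encode_def using parv_xor[of k "A i" x z] by (simp add: parv_def)

lemma encode_zv: "encode n k A zv = zv"
  by (simp add: encode_def zv_def fun_eq_iff)

lemma encode_bvecs: "encode n k A x \<in> bvecs n"
  by (simp add: encode_def bvecs_def)

lemma Wc_shift1: "Wc \<epsilon> n (xorv u (encode n k A x)) (encode n k A (xorv x z)) = Wc \<epsilon> n u (encode n k A z)"
  unfolding Wc_def by (intro prod.cong refl) (auto simp: encode_xor om_def xorv_def[of u])

lemma Wc_shift0: "Wc \<epsilon> n (xorv u (encode n k A x)) (encode n k A x) = Wc \<epsilon> n u zv"
  unfolding Wc_def by (intro prod.cong refl) (auto simp: xorv_def om_def zv_def)

lemma Wc_pos: "0 < \<epsilon> \<Longrightarrow> \<epsilon> < 1 \<Longrightarrow> 0 < Wc \<epsilon> n y c"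
  unfolding Wc_def om_def by (intro prod_pos) auto

lemma xorv_bvecs: "u \<in> bvecs m \<Longrightarrow> v \<in> bvecs m \<Longrightarrow> xorv u v \<in> bvecs m"
  by (auto simp: bvecs_def xorv_def)

lemma xorv_xorv: "xorv (xorv u v) v = u"
  by (auto simp: xorv_def fun_eq_iff)

lemma xorv_xorv': "xorv x (xorv x z) = z"
  by (auto simp: xorv_def fun_eq_iff)

lemma bij_xorv: "v \<in> bvecs m \<Longrightarrow> bij_betw (\<lambda>u. xorv u v) (bvecs m) (bvecs m)"
  by (rule bij_betw_byWitness[where f'="\<lambda>u. xorv u v"]) (auto simp: xorv_xorv xorv_bvecs)

lemma bij_xorv': "x \<in> bvecs m \<Longrightarrow> bij_betw (xorv x) (bvecs m) (bvecs m)"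
  by (rule bij_betw_byWitness[where f'="xorv x"]) (auto simp: xorv_xorv' xorv_bvecs)

lemma zv_bvecs: "zv \<in> bvecs m" by (simp add: zv_def bvecs_def)

definition Ob :: "real \<Rightarrow> nat \<Rightarrow> nat \<Rightarrow> (nat \<Rightarrow> nat \<Rightarrow> bool) \<Rightarrow> (nat \<Rightarrow> bool) \<Rightarrow> real" where
  "Ob \<epsilon> n k A y = (\<Sum>z\<in>bvecs k. Wc \<epsilon> n y (encode n k A z))"

lemma Ob_pos: "0 < \<epsilon> \<Longrightarrow> \<epsilon> < 1 \<Longrightarrow> 0 < Ob \<epsilon> n k A y"
  unfolding Ob_def using zv_bvecs by (intro sum_pos) (auto simp: Wc_pos)

lemma Ob_shift: "x \<in> bvecs k \<Longrightarrow> Ob \<epsilon> n k A (xorv u (encode n k A x)) = Ob \<epsilon> n k A u"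
proof -
  assume x: "x \<in> bvecs k"
  have "Ob \<epsilon> n k A (xorv u (encode n k A x)) = (\<Sum>z\<in>bvecs k. Wc \<epsilon> n (xorv u (encode n k A x)) (encode n k A (xorv x z)))"
    unfolding Ob_def using sum.reindex_bij_betw[OF bij_xorv'[OF x], of "\<lambda>x'. Wc \<epsilon> n (xorv u (encode n k A x)) (encode n k A x')"]
    by simp
  also have "\<dots> = Ob \<epsilon> n k A u" unfolding Ob_def Wc_shift1 ..
  finally show ?thesis .
qed

definition Psi :: "real \<Rightarrow> nat \<Rightarrow> nat \<Rightarrow> (nat \<Rightarrow> nat \<Rightarrow> bool) \<Rightarrow> real" where
  "Psi \<epsilon> n k A = (\<Sum>u\<in>bvecs n. Wc \<epsilon> n u zv * (Ob \<epsilon> n k A u - Wc \<epsilon> n u zv) / Ob \<epsilon> n k A u)"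

lemma one_minus_pc:
  assumes "0 < \<epsilon>" "\<epsilon> < 1"
  shows "1 - p_c \<epsilon> n k A = Psi \<epsilon> n k A"
proof -
  let ?E = "encode n k A"
  let ?O = "Ob \<epsilon> n k A"
  have jo: "joint \<epsilon> n k A x y = Wc \<epsilon> n y (?E x) / 2 ^ k" for x y
    by (simp add: joint_def bsc_lik_W)
  have oo: "out_prob \<epsilon> n k A y = ?O y / 2 ^ k" for y
    by (simp add: out_prob_def jo Ob_def sum_divide_distrib)
  have pc: "p_c \<epsilon> n k A = (\<Sum>x\<in>bvecs k. \<Sum>y\<in>bvecs n. Wc \<epsilon> n y (?E x) / 2 ^ k * (Wc \<epsilon> n y (?E x) / ?O y))"
    unfolding p_c_def posterior_def jo oo by simp
  have one: "1 = (\<Sum>x\<in>bvecs k. \<Sum>y\<in>bvecs n. Wc \<epsilon> n y (?E x) / 2 ^ k)"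
    by (simp add: sum_divide_distrib[symmetric] sum_Wc card_bvecs)
  have sh: "(\<Sum>y\<in>bvecs n. Wc \<epsilon> n y (?E x) * (?O y - Wc \<epsilon> n y (?E x)) / ?O y) = Psi \<epsilon> n k A"
    if x: "x \<in> bvecs k" for x
  proof -
    have "(\<Sum>y\<in>bvecs n. Wc \<epsilon> n y (?E x) * (?O y - Wc \<epsilon> n y (?E x)) / ?O y)
        = (\<Sum>u\<in>bvecs n. Wc \<epsilon> n (xorv u (?E x)) (?E x) * (?O (xorv u (?E x)) - Wc \<epsilon> n (xorv u (?E x)) (?E x)) / ?O (xorv u (?E x)))"
      using sum.reindex_bij_betw[OF bij_xorv[OF encode_bvecs[of n k A x]],
          of "\<lambda>y. Wc \<epsilon> n y (?E x) * (?O y - Wc \<epsilon> n y (?E x)) / ?O y"] by simp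
    also have "\<dots> = Psi \<epsilon> n k A"
      unfolding Psi_def Wc_shift0 Ob_shift[OF x] ..
    finally show ?thesis .
  qed
  have "1 - p_c \<epsilon> n k A = (\<Sum>x\<in>bvecs k. \<Sum>y\<in>bvecs n. Wc \<epsilon> n y (?E x) / 2 ^ k - Wc \<epsilon> n y (?E x) / 2 ^ k * (Wc \<epsilon> n y (?E x) / ?O y))"
    unfolding pc by (subst one) (simp add: sum_subtractf)
  also have "\<dots> = (\<Sum>x\<in>bvecs k. (\<Sum>y\<in>bvecs n. Wc \<epsilon> n y (?E x) * (?O y - Wc \<epsilon> n y (?E x)) / ?O y) / 2 ^ k)"
    unfolding sum_divide_distrib
    using Ob_pos[OF assms, of n k A, THEN less_imp_neq, THEN not_sym] by (intro sum.cong refl) (simp add: field_simps)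
  also have "\<dots> = (\<Sum>x\<in>bvecs k. Psi \<epsilon> n k A / 2 ^ k)"
    by (intro sum.cong refl) (simp add: sh)
  also have "\<dots> = Psi \<epsilon> n k A" by (simp add: card_bvecs)
  finally show ?thesis .
qed



lemma frac_bound:
  fixes L b l :: real
  assumes L: "0 < L" and b: "0 \<le> b" and l: "0 \<le> l" "l \<le> 1"
  shows "L * b / (L + b) \<le> L powr (1 - l) * b powr l"
proof (cases "b = 0")
  case True then show ?thesis by simp
next
  case False
  with b have bp: "0 < b" by simp
  have eq: "L powr (1 - l) * b powr l = L * (b / L) powr l"
    using L bp by (simp add: powr_divide powr_diff field_simps powr_one)
  have "b / (L + b) \<le> (b / L) powr l"
  proof (cases "b \<le> L")
    case True
    have "b / (L + b) \<le> b / L" using L bp by (intro divide_left_mono) auto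
    also have "\<dots> = (b / L) powr 1" using L bp by simp
    also have "\<dots> \<le> (b / L) powr l" using True L bp l by (intro powr_mono') auto
    finally show ?thesis .
  next
    case False
    have "b / (L + b) \<le> 1" using L bp by simp
    also have "1 \<le> (b / L) powr l" using False L bp l by (intro ge_one_powr_ge_zero) auto
    finally show ?thesis .
  qed
  then have "L * (b / (L + b)) \<le> L * (b / L) powr l" using L by (intro mult_left_mono) auto
  then show ?thesis using eq by simp
qed

lemma split_bound:
  fixes L a b l :: real
  assumes L: "0 < L" and a: "0 \<le> a" and b: "0 \<le> b" and l: "0 \<le> l" "l \<le> 1"
  shows "L * ((L + a + b) - L) / (L + a + b) \<le> sqrt L * sqrt a + L powr (1 - l) * b powr l"
proof -
  have "L * ((L + a + b) - L) / (L + a + b) = L * a / (L + a + b) + L * b / (L + a + b)"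
    by (simp add: add_divide_distrib[symmetric] distrib_left)
  also have "\<dots> \<le> L * a / (L + a) + L * b / (L + b)"
  proof (rule add_mono)
    show "L * a / (L + a + b) \<le> L * a / (L + a)" by (rule divide_left_mono) (use L a b in auto)
    show "L * b / (L + a + b) \<le> L * b / (L + b)" by (rule divide_left_mono) (use L a b in auto)
  qed
  also have "L * a / (L + a) \<le> L powr (1 - 1/2) * a powr (1/2)"
    using L a by (intro frac_bound) auto
  also have "L powr (1 - 1/2) * a powr (1/2) = sqrt L * sqrt a"
    using L a by (simp add: powr_half_sqrt)
  also have "L * b / (L + b) \<le> L powr (1 - l) * b powr l"
    using L b l by (intro frac_bound) auto
  finally show ?thesis by simp
qed

lemma sqrt_sum_le:
  assumes "finite S" "\<And>z. z \<in> S \<Longrightarrow> 0 \<le> f z"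
  shows "sqrt (\<Sum>z\<in>S. f z) \<le> (\<Sum>z\<in>S. sqrt (f z))"
  using assms
proof (induction S rule: finite_induct)
  case empty then show ?case by simp
next
  case (insert x F)
  have "sqrt (\<Sum>z\<in>insert x F. f z) = sqrt (f x + (\<Sum>z\<in>F. f z))" using insert by simp
  also have "\<dots> \<le> sqrt (f x) + sqrt (\<Sum>z\<in>F. f z)"
    using insert by (intro sqrt_add_le_add_sqrt) (auto intro: sum_nonneg)
  also have "\<dots> \<le> sqrt (f x) + (\<Sum>z\<in>F. sqrt (f z))" using insert by auto
  finally show ?case using insert by simp
qed

definition wt :: "nat \<Rightarrow> (nat \<Rightarrow> bool) \<Rightarrow> nat" where
  "wt k z = card {j. j < k \<and> z j}"

definition Lz :: "nat \<Rightarrow> nat \<Rightarrow> (nat \<Rightarrow> bool) set" where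
  "Lz k W = {z \<in> bvecs k. 0 < wt k z \<and> wt k z < W}"

definition Hz :: "nat \<Rightarrow> nat \<Rightarrow> (nat \<Rightarrow> bool) set" where
  "Hz k W = {z \<in> bvecs k. W \<le> wt k z}"

lemma wt_zero: "z \<in> bvecs k \<Longrightarrow> wt k z = 0 \<Longrightarrow> z = zv"
  by (auto simp: wt_def bvecs_def zv_def fun_eq_iff) (metis not_le)

lemma wt_zv: "wt k zv = 0" by (simp add: wt_def zv_def)

lemma bvecs_split:
  assumes "1 \<le> W"
  shows "bvecs k = insert zv (Lz k W \<union> Hz k W)" "zv \<notin> Lz k W \<union> Hz k W" "Lz k W \<inter> Hz k W = {}"
  using assms wt_zero[of _ k] zv_bvecs[of k] by (auto simp: Lz_def Hz_def wt_zv)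

lemma finite_LH[simp]: "finite (Lz k W)" "finite (Hz k W)"
  by (auto simp: Lz_def Hz_def)

lemma Ob_split:
  assumes "1 \<le> W"
  shows "Ob \<epsilon> n k A u = Wc \<epsilon> n u zv + (\<Sum>z\<in>Lz k W. Wc \<epsilon> n u (encode n k A z)) + (\<Sum>z\<in>Hz k W. Wc \<epsilon> n u (encode n k A z))"
proof -
  let ?f = "\<lambda>z. Wc \<epsilon> n u (encode n k A z)"
  have "sum ?f (insert zv (Lz k W \<union> Hz k W)) = ?f zv + sum ?f (Lz k W \<union> Hz k W)"
    by (rule sum.insert) (use bvecs_split(2)[OF assms] in auto)
  also have "sum ?f (Lz k W \<union> Hz k W) = sum ?f (Lz k W) + sum ?f (Hz k W)"
    by (rule sum.union_disjoint) (use bvecs_split(3)[OF assms] in auto)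
  finally show ?thesis unfolding Ob_def using bvecs_split(1)[OF assms] by (simp add: encode_zv add.assoc)
qed

lemma Psi_bound:
  assumes "0 < \<epsilon>" "\<epsilon> < 1" "1 \<le> W" "0 \<le> l" "l \<le> 1"
  shows "Psi \<epsilon> n k A \<le> (\<Sum>u\<in>bvecs n. sqrt (Wc \<epsilon> n u zv) * (\<Sum>z\<in>Lz k W. sqrt (Wc \<epsilon> n u (encode n k A z)))
           + Wc \<epsilon> n u zv powr (1 - l) * (\<Sum>z\<in>Hz k W. Wc \<epsilon> n u (encode n k A z)) powr l)"
  unfolding Psi_def
proof (rule sum_mono)
  fix u
  let ?L = "Wc \<epsilon> n u zv"
  let ?a = "\<Sum>z\<in>Lz k W. Wc \<epsilon> n u (encode n k A z)"
  let ?b = "\<Sum>z\<in>Hz k W. Wc \<epsilon> n u (encode n k A z)"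
  have pos: "0 < ?L" "0 \<le> ?a" "0 \<le> ?b"
    using assms by (auto simp: Wc_pos intro!: sum_nonneg less_imp_le[OF Wc_pos])
  have "?L * (Ob \<epsilon> n k A u - ?L) / Ob \<epsilon> n k A u = ?L * ((?L + ?a + ?b) - ?L) / (?L + ?a + ?b)"
    by (simp add: Ob_split[OF assms(3)])
  also have "\<dots> \<le> sqrt ?L * sqrt ?a + ?L powr (1 - l) * ?b powr l"
    using pos assms by (intro split_bound) auto
  also have "sqrt ?L * sqrt ?a \<le> sqrt ?L * (\<Sum>z\<in>Lz k W. sqrt (Wc \<epsilon> n u (encode n k A z)))"
    using assms by (intro mult_left_mono sqrt_sum_le) (auto intro: less_imp_le[OF Wc_pos])
  finally show "?L * (Ob \<epsilon> n k A u - ?L) / Ob \<epsilon> n k A u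
     \<le> sqrt ?L * (\<Sum>z\<in>Lz k W. sqrt (Wc \<epsilon> n u (encode n k A z))) + ?L powr (1 - l) * ?b powr l"
    by simp
qed



lemma sqrt_prod: "sqrt (prod f I) = (\<Prod>i\<in>I. sqrt (f i))"
  by (induction I rule: infinite_finite_induct) (auto simp: real_sqrt_mult)

lemma jensen_powr:
  fixes p X :: "'a \<Rightarrow> real"
  assumes I: "finite I" and p: "\<And>i. i \<in> I \<Longrightarrow> 0 \<le> p i" and ps: "(\<Sum>i\<in>I. p i) = 1"
    and X: "\<And>i. i \<in> I \<Longrightarrow> 0 \<le> X i" and l: "0 < l" "l < 1"
  shows "(\<Sum>i\<in>I. p i * X i powr l) \<le> (\<Sum>i\<in>I. p i * X i) powr l"
proof -
  define m where "m = (\<Sum>i\<in>I. p i * X i)"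
  have m0: "0 \<le> m" unfolding m_def using p X by (intro sum_nonneg) auto
  show ?thesis
  proof (cases "m = 0")
    case True
    have "p i * X i = 0" if "i \<in> I" for i
      using sum_nonneg_eq_0_iff[of I "\<lambda>i. p i * X i"] True I p X that unfolding m_def by auto
    then have z: "p i * X i powr l = 0" if "i \<in> I" for i
      using that by (cases "X i = 0") auto
    have "(\<Sum>i\<in>I. p i * X i powr l) = 0" using z by (intro sum.neutral) auto
    then show ?thesis by simp
  next
    case False
    with m0 have mp: "0 < m" by simp
    have key: "X i powr l \<le> m powr l * (l * (X i / m) + (1 - l))" if i: "i \<in> I" for i
    proof (cases "X i = 0")
      case True then show ?thesis using l mp by simp
    next
      case False
      with X[OF i] have xp: "0 < X i" by simp
      have "(X i / m) powr l * 1 powr (1 - l) \<le> l * (X i / m) + (1 - l) * 1"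
        using l xp mp by (intro Youngs_inequality_0) auto
      then have "(X i / m) powr l \<le> l * (X i / m) + (1 - l)" by simp
      then have "m powr l * (X i / m) powr l \<le> m powr l * (l * (X i / m) + (1 - l))"
        by (intro mult_left_mono) auto
      moreover have "m powr l * (X i / m) powr l = X i powr l"
        using mp xp by (simp add: powr_divide)
      ultimately show ?thesis by simp
    qed
    have "(\<Sum>i\<in>I. p i * X i powr l) \<le> (\<Sum>i\<in>I. p i * (m powr l * (l * (X i / m) + (1 - l))))"
      using key p by (intro sum_mono mult_left_mono) auto
    also have "\<dots> = (\<Sum>i\<in>I. (m powr l * (l / m)) * (p i * X i) + (m powr l * (1 - l)) * p i)"
      by (intro sum.cong refl) (simp add: algebra_simps)
    also have "\<dots> = m powr l * (l / m * (\<Sum>i\<in>I. p i * X i) + (1 - l) * (\<Sum>i\<in>I. p i))"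
      by (simp only: sum.distrib sum_distrib_left[symmetric] distrib_left mult.assoc)
    also have "\<dots> = m powr l"
      using mp ps unfolding m_def[symmetric] by simp
    finally show ?thesis unfolding m_def .
  qed
qed

lemma Wc_encode: "Wc \<epsilon> n u (encode n k A z) = (\<Prod>i<n. om \<epsilon> (u i) (parv k (A i) z))"
  unfolding Wc_def by (intro prod.cong refl) (simp add: encode_def parv_def)

lemma om_nonneg: "0 \<le> \<epsilon> \<Longrightarrow> \<epsilon> \<le> 1 \<Longrightarrow> 0 \<le> om \<epsilon> b c"
  by (simp add: om_def)

lemma light_expect:
  assumes "0 \<le> \<epsilon>" "\<epsilon> \<le> 1"
  shows "(\<Sum>A\<in>bmats n k. bern_mat \<rho> n k A * (\<Sum>u\<in>bvecs n. sqrt (Wc \<epsilon> n u zv) * sqrt (Wc \<epsilon> n u (encode n k A z))))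
    = (1 - qz \<rho> k z * (1 - 2 * sqrt (\<epsilon> * (1 - \<epsilon>)))) ^ n"
proof -
  let ?q = "qz \<rho> k z"
  have "(\<Sum>A\<in>bmats n k. bern_mat \<rho> n k A * (\<Sum>u\<in>bvecs n. sqrt (Wc \<epsilon> n u zv) * sqrt (Wc \<epsilon> n u (encode n k A z))))
     = (\<Sum>u\<in>bvecs n. sqrt (Wc \<epsilon> n u zv) * (\<Sum>A\<in>bmats n k. bern_mat \<rho> n k A * (\<Prod>i<n. sqrt (om \<epsilon> (u i) (parv k (A i) z)))))"
    unfolding Wc_encode sqrt_prod
    by (simp add: sum_distrib_left sum_distrib_right algebra_simps sum.swap[of _ "bmats n k"])
  also have "\<dots> = (\<Sum>u\<in>bvecs n. \<Prod>i<n. sqrt (om \<epsilon> (u i) False) * ((1 - ?q) * sqrt (om \<epsilon> (u i) False) + ?q * sqrt (om \<epsilon> (u i) True)))"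
  proof (rule sum.cong[OF refl])
    fix u
    show "sqrt (Wc \<epsilon> n u zv) * (\<Sum>A\<in>bmats n k. bern_mat \<rho> n k A * (\<Prod>i<n. sqrt (om \<epsilon> (u i) (parv k (A i) z))))
      = (\<Prod>i<n. sqrt (om \<epsilon> (u i) False) * ((1 - ?q) * sqrt (om \<epsilon> (u i) False) + ?q * sqrt (om \<epsilon> (u i) True)))"
      using expect_rows[of \<rho> n k "\<lambda>i c. sqrt (om \<epsilon> (u i) c)" z]
      by (simp add: Wc_def sqrt_prod zv_def prod.distrib)
  qed
  also have "\<dots> = (\<Prod>i<n. 1 - ?q * (1 - 2 * (sqrt \<epsilon> * sqrt (1 - \<epsilon>))))"
  proof -
    have s1: "sqrt \<epsilon> * sqrt \<epsilon> = \<epsilon>" "sqrt (1 - \<epsilon>) * sqrt (1 - \<epsilon>) = 1 - \<epsilon>" using assms by auto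
    have "sqrt (1 - \<epsilon>) * ((1 - ?q) * sqrt (1 - \<epsilon>) + ?q * sqrt \<epsilon>) + sqrt \<epsilon> * ((1 - ?q) * sqrt \<epsilon> + ?q * sqrt (1 - \<epsilon>))
        = (1 - ?q) * (sqrt (1 - \<epsilon>) * sqrt (1 - \<epsilon>) + sqrt \<epsilon> * sqrt \<epsilon>) + 2 * ?q * (sqrt \<epsilon> * sqrt (1 - \<epsilon>))"
      by (simp only: algebra_simps)
    also have "\<dots> = 1 - ?q * (1 - 2 * (sqrt \<epsilon> * sqrt (1 - \<epsilon>)))" unfolding s1 by (simp add: algebra_simps)
    finally have key: "sqrt (1 - \<epsilon>) * ((1 - ?q) * sqrt (1 - \<epsilon>) + ?q * sqrt \<epsilon>) + sqrt \<epsilon> * ((1 - ?q) * sqrt \<epsilon> + ?q * sqrt (1 - \<epsilon>))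
        = 1 - ?q * (1 - 2 * (sqrt \<epsilon> * sqrt (1 - \<epsilon>)))" .
    show ?thesis by (subst sum_bvecs) (intro prod.cong refl; simp only: om_def if_True if_False simp_thms key)
  qed
  finally show ?thesis by (simp add: real_sqrt_mult)
qed



lemma bv_nonneg: "0 \<le> \<rho> \<Longrightarrow> \<rho> \<le> 1 \<Longrightarrow> 0 \<le> bv \<rho> k r"
  unfolding bv_def by (intro prod_nonneg) auto

lemma bern_nonneg: "0 \<le> \<rho> \<Longrightarrow> \<rho> \<le> 1 \<Longrightarrow> 0 \<le> bern_mat \<rho> n k A"
  unfolding bern_mat_prod by (intro prod_nonneg bv_nonneg) auto

lemma qz_bounds: assumes "0 \<le> \<rho>" "\<rho> \<le> 1" shows "0 \<le> qz \<rho> k z" "qz \<rho> k z \<le> 1"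
proof -
  show "0 \<le> qz \<rho> k z" unfolding qz_def using assms by (intro sum_nonneg) (auto intro: bv_nonneg)
  have "qz \<rho> k z \<le> (\<Sum>r\<in>bvecs k. bv \<rho> k r)"
    unfolding qz_def using assms by (intro sum_mono) (auto intro: bv_nonneg)
  then show "qz \<rho> k z \<le> 1" by (simp add: sum_bv)
qed

lemma factor_le:
  fixes q \<epsilon> \<eta> :: real
  assumes "0 \<le> \<epsilon>" "\<epsilon> \<le> 1" "\<bar>q - 1/2\<bar> \<le> \<eta>"
  shows "(1 - q) * om \<epsilon> b False + q * om \<epsilon> b True \<le> 1/2 + \<eta>"
proof -
  have h1: "\<bar>1 - 2 * \<epsilon>\<bar> \<le> 1" using assms by auto
  have "\<bar>1/2 - q\<bar> * \<bar>1 - 2 * \<epsilon>\<bar> \<le> \<bar>1/2 - q\<bar> * 1" by (rule mult_left_mono[OF h1]) simp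
  then have h2: "\<bar>(1/2 - q) * (1 - 2 * \<epsilon>)\<bar> \<le> \<eta>" using assms(3) by (simp add: abs_mult abs_minus_commute)
  have e1: "(1 - q) * (1 - \<epsilon>) + q * \<epsilon> = 1/2 + (1/2 - q) * (1 - 2 * \<epsilon>)" by (simp add: algebra_simps)
  have e2: "(1 - q) * \<epsilon> + q * (1 - \<epsilon>) = 1/2 - (1/2 - q) * (1 - 2 * \<epsilon>)" by (simp add: algebra_simps)
  show ?thesis using h2 e1 e2 by (cases b) (auto simp: om_def abs_le_iff)
qed

lemma factor_nonneg:
  fixes q \<epsilon> :: real
  assumes "0 \<le> \<epsilon>" "\<epsilon> \<le> 1" "0 \<le> q" "q \<le> 1"
  shows "0 \<le> (1 - q) * om \<epsilon> b False + q * om \<epsilon> b True"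
  using assms by (intro add_nonneg_nonneg mult_nonneg_nonneg om_nonneg) auto

lemma heavy_expect:
  assumes e: "0 \<le> \<epsilon>" "\<epsilon> \<le> 1" and r: "0 \<le> \<rho>" "\<rho> \<le> 1" and l: "0 < l" "l < 1"
    and eta0: "0 \<le> 1/2 + \<eta>" and eta: "\<And>z. z \<in> Hz k W \<Longrightarrow> \<bar>qz \<rho> k z - 1/2\<bar> \<le> \<eta>"
  shows "(\<Sum>A\<in>bmats n k. bern_mat \<rho> n k A * (\<Sum>u\<in>bvecs n. Wc \<epsilon> n u zv powr (1 - l) * (\<Sum>z\<in>Hz k W. Wc \<epsilon> n u (encode n k A z)) powr l))
    \<le> ((1 - \<epsilon>) powr (1 - l) + \<epsilon> powr (1 - l)) ^ n * (2 ^ k * (1/2 + \<eta>) ^ n) powr l"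
proof -
  let ?S = "\<lambda>A u. \<Sum>z\<in>Hz k W. Wc \<epsilon> n u (encode n k A z)"
  have Wnn: "0 \<le> Wc \<epsilon> n u c" for u c unfolding Wc_def using e by (intro prod_nonneg om_nonneg) auto
  have "(\<Sum>A\<in>bmats n k. bern_mat \<rho> n k A * (\<Sum>u\<in>bvecs n. Wc \<epsilon> n u zv powr (1 - l) * ?S A u powr l))
      = (\<Sum>u\<in>bvecs n. Wc \<epsilon> n u zv powr (1 - l) * (\<Sum>A\<in>bmats n k. bern_mat \<rho> n k A * ?S A u powr l))"
    by (simp add: sum_distrib_left algebra_simps sum.swap[of _ "bmats n k"])
  also have "\<dots> \<le> (\<Sum>u\<in>bvecs n. Wc \<epsilon> n u zv powr (1 - l) * (2 ^ k * (1/2 + \<eta>) ^ n) powr l)"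
  proof (rule sum_mono)
    fix u assume u: "u \<in> bvecs n"
    have T0: "0 \<le> (\<Sum>A\<in>bmats n k. bern_mat \<rho> n k A * ?S A u)"
      using r Wnn by (intro sum_nonneg mult_nonneg_nonneg bern_nonneg) (auto intro: sum_nonneg)
    have "(\<Sum>A\<in>bmats n k. bern_mat \<rho> n k A * ?S A u) = (\<Sum>z\<in>Hz k W. \<Sum>A\<in>bmats n k. bern_mat \<rho> n k A * Wc \<epsilon> n u (encode n k A z))"
      by (simp add: sum_distrib_left sum.swap[of _ "bmats n k"])
    also have "\<dots> = (\<Sum>z\<in>Hz k W. \<Prod>i<n. (1 - qz \<rho> k z) * om \<epsilon> (u i) False + qz \<rho> k z * om \<epsilon> (u i) True)"
    proof (rule sum.cong[OF refl])
      fix z show "(\<Sum>A\<in>bmats n k. bern_mat \<rho> n k A * Wc \<epsilon> n u (encode n k A z))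
        = (\<Prod>i<n. (1 - qz \<rho> k z) * om \<epsilon> (u i) False + qz \<rho> k z * om \<epsilon> (u i) True)"
        unfolding Wc_encode using expect_rows[of \<rho> n k "\<lambda>i c. om \<epsilon> (u i) c" z] by simp
    qed
    also have "\<dots> \<le> (\<Sum>z\<in>Hz k W. (1/2 + \<eta>) ^ n)"
    proof (rule sum_mono)
      fix z assume z: "z \<in> Hz k W"
      have "(\<Prod>i<n. (1 - qz \<rho> k z) * om \<epsilon> (u i) False + qz \<rho> k z * om \<epsilon> (u i) True) \<le> (\<Prod>i<n. 1/2 + \<eta>)"
        using e eta[OF z] qz_bounds[OF r] by (intro prod_mono conjI factor_nonneg factor_le) auto
      then show "(\<Prod>i<n. (1 - qz \<rho> k z) * om \<epsilon> (u i) False + qz \<rho> k z * om \<epsilon> (u i) True) \<le> (1/2 + \<eta>) ^ n"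
        by simp
    qed
    also have "\<dots> \<le> 2 ^ k * (1/2 + \<eta>) ^ n"
    proof -
      have "card (Hz k W) \<le> card (bvecs k)" by (rule card_mono) (auto simp: Hz_def)
      then have "real (card (Hz k W)) \<le> 2 ^ k" by (simp add: card_bvecs)
      then show ?thesis using eta0 by (simp add: mult_right_mono)
    qed
    finally have T: "(\<Sum>A\<in>bmats n k. bern_mat \<rho> n k A * ?S A u) \<le> 2 ^ k * (1/2 + \<eta>) ^ n" .
    have "(\<Sum>A\<in>bmats n k. bern_mat \<rho> n k A * ?S A u powr l) \<le> (\<Sum>A\<in>bmats n k. bern_mat \<rho> n k A * ?S A u) powr l"
      using r l Wnn by (intro jensen_powr) (auto simp: sum_bern bern_nonneg intro: sum_nonneg)
    also have "\<dots> \<le> (2 ^ k * (1/2 + \<eta>) ^ n) powr l"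
      using T T0 l by (intro powr_mono2) auto
    finally show "Wc \<epsilon> n u zv powr (1 - l) * (\<Sum>A\<in>bmats n k. bern_mat \<rho> n k A * ?S A u powr l)
        \<le> Wc \<epsilon> n u zv powr (1 - l) * (2 ^ k * (1/2 + \<eta>) ^ n) powr l"
      by (intro mult_left_mono) auto
  qed
  also have "\<dots> = ((1 - \<epsilon>) powr (1 - l) + \<epsilon> powr (1 - l)) ^ n * (2 ^ k * (1/2 + \<eta>) ^ n) powr l"
  proof -
    have "(\<Sum>u\<in>bvecs n. Wc \<epsilon> n u zv powr (1 - l)) = (\<Sum>u\<in>bvecs n. \<Prod>i<n. om \<epsilon> (u i) False powr (1 - l))"
      unfolding Wc_def prod_powr_distrib zv_def ..
    also have "\<dots> = ((1 - \<epsilon>) powr (1 - l) + \<epsilon> powr (1 - l)) ^ n"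
      by (subst sum_bvecs) (simp add: om_def)
    finally show ?thesis by (simp add: sum_distrib_right[symmetric])
  qed
  finally show ?thesis .
qed



lemma B_bounds:
  assumes "0 \<le> \<epsilon>" "\<epsilon> \<le> 1"
  shows "0 \<le> 2 * sqrt (\<epsilon> * (1 - \<epsilon>))" "2 * sqrt (\<epsilon> * (1 - \<epsilon>)) \<le> 1"
proof -
  show "0 \<le> 2 * sqrt (\<epsilon> * (1 - \<epsilon>))" using assms by simp
  have h: "0 \<le> (\<epsilon> - 1/2) * (\<epsilon> - 1/2)" by simp
  have "\<epsilon> * (1 - \<epsilon>) = (1/2)^2 - (\<epsilon> - 1/2) * (\<epsilon> - 1/2)" by (simp add: algebra_simps power2_eq_square)
  then have "\<epsilon> * (1 - \<epsilon>) \<le> (1/2)^2" using h by linarith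
  then have "sqrt (\<epsilon> * (1 - \<epsilon>)) \<le> sqrt ((1/2)^2)" by (rule real_sqrt_le_mono)
  then show "2 * sqrt (\<epsilon> * (1 - \<epsilon>)) \<le> 1" by simp
qed

lemma Psi_nonneg:
  assumes "0 < \<epsilon>" "\<epsilon> < 1"
  shows "0 \<le> Psi \<epsilon> n k A"
  unfolding Psi_def
proof (rule sum_nonneg)
  fix u
  have "Wc \<epsilon> n u zv \<le> Ob \<epsilon> n k A u"
    unfolding Ob_def using zv_bvecs[of k] assms
    by (subst encode_zv[symmetric, of n k A]) (rule member_le_sum, auto intro: less_imp_le[OF Wc_pos])
  then show "0 \<le> Wc \<epsilon> n u zv * (Ob \<epsilon> n k A u - Wc \<epsilon> n u zv) / Ob \<epsilon> n k A u"
    using Wc_pos[OF assms] Ob_pos[OF assms] by (intro divide_nonneg_pos mult_nonneg_nonneg) (auto intro: less_imp_le)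
qed

lemma one_minus_expected:
  assumes "0 < \<epsilon>" "\<epsilon> < 1" "0 \<le> \<rho>" "\<rho> \<le> 1"
  shows "1 - expected_pc \<rho> \<epsilon> n k = (\<Sum>A\<in>bmats n k. bern_mat \<rho> n k A * Psi \<epsilon> n k A)"
proof -
  have "1 - expected_pc \<rho> \<epsilon> n k = (\<Sum>A\<in>bmats n k. bern_mat \<rho> n k A * (1 - p_c \<epsilon> n k A))"
    unfolding expected_pc_def by (simp add: sum_bern algebra_simps sum_subtractf)
  then show ?thesis using one_minus_pc[OF assms(1,2)] by simp
qed

lemma main_bound:
  assumes e: "0 < \<epsilon>" "\<epsilon> < 1" and r: "0 \<le> \<rho>" "\<rho> \<le> 1" and W: "1 \<le> W" and l: "0 < l" "l < 1"
    and eta0: "0 \<le> 1/2 + \<eta>" and eta: "\<And>z. z \<in> Hz k W \<Longrightarrow> \<bar>qz \<rho> k z - 1/2\<bar> \<le> \<eta>"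
    and qm: "\<And>z. z \<in> Lz k W \<Longrightarrow> qm \<le> qz \<rho> k z" and qm0: "0 \<le> qm"
  shows "1 - expected_pc \<rho> \<epsilon> n k \<le> real (card (Lz k W)) * (1 - qm * (1 - 2 * sqrt (\<epsilon> * (1 - \<epsilon>)))) ^ n
     + ((1 - \<epsilon>) powr (1 - l) + \<epsilon> powr (1 - l)) ^ n * (2 ^ k * (1/2 + \<eta>) ^ n) powr l"
proof -
  let ?B = "2 * sqrt (\<epsilon> * (1 - \<epsilon>))"
  let ?lt = "\<lambda>A. \<Sum>u\<in>bvecs n. sqrt (Wc \<epsilon> n u zv) * (\<Sum>z\<in>Lz k W. sqrt (Wc \<epsilon> n u (encode n k A z)))"
  let ?ht = "\<lambda>A. \<Sum>u\<in>bvecs n. Wc \<epsilon> n u zv powr (1 - l) * (\<Sum>z\<in>Hz k W. Wc \<epsilon> n u (encode n k A z)) powr l"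
  have Bb: "0 \<le> ?B" "?B \<le> 1" using B_bounds[of \<epsilon>] e by auto
  have "1 - expected_pc \<rho> \<epsilon> n k = (\<Sum>A\<in>bmats n k. bern_mat \<rho> n k A * Psi \<epsilon> n k A)"
    using one_minus_expected e r by simp
  also have "\<dots> \<le> (\<Sum>A\<in>bmats n k. bern_mat \<rho> n k A * (?lt A + ?ht A))"
  proof (rule sum_mono)
    fix A
    have "Psi \<epsilon> n k A \<le> ?lt A + ?ht A"
      using Psi_bound[OF e W less_imp_le[OF l(1)] less_imp_le[OF l(2)], of n k A] by (simp only: sum.distrib)
    then show "bern_mat \<rho> n k A * Psi \<epsilon> n k A \<le> bern_mat \<rho> n k A * (?lt A + ?ht A)"
      using r by (intro mult_left_mono bern_nonneg) auto
  qed
  also have "\<dots> = (\<Sum>A\<in>bmats n k. bern_mat \<rho> n k A * ?lt A) + (\<Sum>A\<in>bmats n k. bern_mat \<rho> n k A * ?ht A)"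
    by (simp add: distrib_left sum.distrib)
  finally have main: "1 - expected_pc \<rho> \<epsilon> n k \<le> (\<Sum>A\<in>bmats n k. bern_mat \<rho> n k A * ?lt A) + (\<Sum>A\<in>bmats n k. bern_mat \<rho> n k A * ?ht A)" .
  have "(\<Sum>A\<in>bmats n k. bern_mat \<rho> n k A * ?lt A)
     = (\<Sum>z\<in>Lz k W. \<Sum>A\<in>bmats n k. bern_mat \<rho> n k A * (\<Sum>u\<in>bvecs n. sqrt (Wc \<epsilon> n u zv) * sqrt (Wc \<epsilon> n u (encode n k A z))))"
  proof -
    have lt: "?lt A = (\<Sum>z\<in>Lz k W. \<Sum>u\<in>bvecs n. sqrt (Wc \<epsilon> n u zv) * sqrt (Wc \<epsilon> n u (encode n k A z)))" for A
      unfolding sum_distrib_left by (rule sum.swap)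
    show ?thesis unfolding lt unfolding sum_distrib_left by (rule sum.swap)
  qed
  also have "\<dots> = (\<Sum>z\<in>Lz k W. (1 - qz \<rho> k z * (1 - ?B)) ^ n)"
    using e by (simp add: light_expect)
  also have "\<dots> \<le> (\<Sum>z\<in>Lz k W. (1 - qm * (1 - ?B)) ^ n)"
  proof (rule sum_mono)
    fix z assume z: "z \<in> Lz k W"
    have q1: "qz \<rho> k z \<le> 1" using qz_bounds[OF r] by simp
    have "qz \<rho> k z * (1 - ?B) \<le> 1 * 1" using q1 Bb qz_bounds[OF r] by (intro mult_mono) auto
    moreover have "qm * (1 - ?B) \<le> qz \<rho> k z * (1 - ?B)" using qm[OF z] Bb by (intro mult_right_mono) auto
    ultimately show "(1 - qz \<rho> k z * (1 - ?B)) ^ n \<le> (1 - qm * (1 - ?B)) ^ n"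
      by (intro power_mono) auto
  qed
  also have "\<dots> = real (card (Lz k W)) * (1 - qm * (1 - ?B)) ^ n" by simp
  finally have LB: "(\<Sum>A\<in>bmats n k. bern_mat \<rho> n k A * ?lt A) \<le> real (card (Lz k W)) * (1 - qm * (1 - ?B)) ^ n" .
  have HB: "(\<Sum>A\<in>bmats n k. bern_mat \<rho> n k A * ?ht A) \<le> ((1 - \<epsilon>) powr (1 - l) + \<epsilon> powr (1 - l)) ^ n * (2 ^ k * (1/2 + \<eta>) ^ n) powr l"
    using e r l eta0 eta by (intro heavy_expect) auto
  show ?thesis using main LB HB by linarith
qed



lemma exists_lambda:
  fixes \<epsilon> R :: real
  assumes e: "0 < \<epsilon>" "\<epsilon> < 1" and R: "R < 1 - bin_entropy \<epsilon>"
  shows "\<exists>l. 0 < l \<and> l < 1 \<and> ((1 - \<epsilon>) powr (1 - l) + \<epsilon> powr (1 - l)) * 2 powr (l * (R - 1)) < 1"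
proof -
  define g where "g = (\<lambda>l. (exp ((1 - l) * ln (1 - \<epsilon>)) + exp ((1 - l) * ln \<epsilon>)) * exp (l * ((R - 1) * ln 2)))"
  define D where "D = (- ln (1 - \<epsilon>) * (1 - \<epsilon>) - ln \<epsilon> * \<epsilon>) + (R - 1) * ln 2"
  have "(g has_real_derivative D) (at 0)"
    unfolding g_def D_def using e
    by (auto intro!: derivative_eq_intros simp: algebra_simps)
  moreover have "D < 0"
  proof -
    have "bin_entropy \<epsilon> * ln 2 = - ln (1 - \<epsilon>) * (1 - \<epsilon>) - ln \<epsilon> * \<epsilon>"
      unfolding bin_entropy_def log_def by (simp add: field_simps)
    then have "D = (bin_entropy \<epsilon> + R - 1) * ln 2" unfolding D_def by (simp add: algebra_simps)
    moreover have "bin_entropy \<epsilon> + R - 1 < 0" using R by simp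
    ultimately show ?thesis by (simp add: mult_neg_pos)
  qed
  ultimately obtain d where d: "d > 0" "\<And>h. h > 0 \<Longrightarrow> h < d \<Longrightarrow> g (0 + h) < g 0"
    using DERIV_neg_dec_right by blast
  define l where "l = min (d/2) (1/2)"
  have l: "0 < l" "l < 1" "l < d" using d by (auto simp: l_def)
  have g0: "g 0 = 1" using e by (simp add: g_def)
  have "g l < 1" using d(2)[OF l(1) l(3)] g0 by simp
  moreover have "g l = ((1 - \<epsilon>) powr (1 - l) + \<epsilon> powr (1 - l)) * 2 powr (l * (R - 1))"
    unfolding g_def using e by (simp add: powr_def mult_ac)
  ultimately show ?thesis using l by auto
qed



lemma lim_test:
  fixes R t c :: real
  assumes "0 < R" "0 < t" "t < 1" "0 < c" "c < 1"
  shows "(\<lambda>n. real W * (R * real n + 1) ^ W * t ^ n + c ^ n) \<longlonglongrightarrow> 0"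
proof -
  have "(\<lambda>n. (R * real n + 1) ^ W * t ^ n) \<longlonglongrightarrow> 0" using assms by real_asymp
  then have "(\<lambda>n. real W * ((R * real n + 1) ^ W * t ^ n)) \<longlonglongrightarrow> 0" by (rule tendsto_mult_right_zero)
  moreover have "(\<lambda>n. c ^ n) \<longlonglongrightarrow> 0" using assms by (intro LIMSEQ_power_zero) auto
  ultimately show ?thesis using tendsto_add[of _ 0 _ _ 0] by (simp add: mult.assoc)
qed

lemma card_Lz: "real (card (Lz k W)) \<le> real W * (real k + 1) ^ W"
proof -
  let ?f = "\<lambda>z. {j. j < k \<and> z j}"
  have inj: "inj_on ?f (Lz k W)"
  proof (rule inj_onI)
    fix x y assume xy: "x \<in> Lz k W" "y \<in> Lz k W" "?f x = ?f y"
    show "x = y"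
    proof
      fix j show "x j = y j"
      proof (cases "j < k")
        case True then show ?thesis using xy(3) by blast
      next
        case False then show ?thesis using xy(1,2) by (auto simp: Lz_def bvecs_def)
      qed
    qed
  qed
  have sub: "?f ` Lz k W \<subseteq> (\<Union>j\<in>{..<W}. {S. S \<subseteq> {..<k} \<and> card S = j})"
    by (auto simp: Lz_def wt_def)
  have "card (Lz k W) = card (?f ` Lz k W)" using card_image[OF inj] by simp
  also have "\<dots> \<le> card (\<Union>j\<in>{..<W}. {S. S \<subseteq> {..<k} \<and> card S = j})"
    by (rule card_mono[OF _ sub]) auto
  also have "\<dots> \<le> (\<Sum>j\<in>{..<W}. card {S. S \<subseteq> {..<k} \<and> card S = j})"
    by (rule card_UN_le) simp
  also have "\<dots> = (\<Sum>j\<in>{..<W}. k choose j)"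
    by (intro sum.cong refl) (simp add: n_subsets)
  finally have 1: "real (card (Lz k W)) \<le> (\<Sum>j\<in>{..<W}. real (k choose j))"
    by (metis of_nat_le_iff of_nat_sum)
  also have "\<dots> \<le> (\<Sum>j\<in>{..<W}. (real k + 1) ^ W)"
  proof (rule sum_mono)
    fix j assume j: "j \<in> {..<W}"
    show "real (k choose j) \<le> (real k + 1) ^ W"
    proof (cases "j \<le> k")
      case True
      have "real (k choose j) \<le> real k ^ j" using binomial_le_pow[OF True]
        by (metis of_nat_le_iff of_nat_power)
      also have "\<dots> \<le> (real k + 1) ^ j" by (intro power_mono) auto
      also have "\<dots> \<le> (real k + 1) ^ W" using j by (intro power_increasing) auto
      finally show ?thesis .
    next
      case False then show ?thesis by (simp add: binomial_eq_0)
    qed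
  qed
  also have "\<dots> = real W * (real k + 1) ^ W" by simp
  finally show ?thesis .
qed

lemma qz_explicit: "qz \<rho> k z = (1 - (1 - 2 * \<rho>) ^ wt k z) / 2"
  using q_formula[of \<rho> k z] unfolding wt_def by simp



theorem theorem2:
  fixes \<epsilon> \<rho> R :: real
  assumes "0 < \<epsilon>" "\<epsilon> < 1/2"
    and "0 < R" "R < 1 - bin_entropy \<epsilon>"
    and "0 < \<rho>" "\<rho> < 1"
  shows "(\<lambda>n. expected_pc \<rho> \<epsilon> n (nat \<lfloor>R * real n\<rfloor>)) \<longlonglongrightarrow> 1"
proof -
  have e: "0 < \<epsilon>" "\<epsilon> < 1" using assms by auto
  have r: "0 \<le> \<rho>" "\<rho> \<le> 1" using assms by auto
  obtain l where l: "0 < l" "l < 1" and c0lt: "((1 - \<epsilon>) powr (1 - l) + \<epsilon> powr (1 - l)) * 2 powr (l * (R - 1)) < 1"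
    using exists_lambda[OF e assms(4)] by blast
  define M where "M = (1 - \<epsilon>) powr (1 - l) + \<epsilon> powr (1 - l)"
  define c0 where "c0 = M * 2 powr (l * (R - 1))"
  have Mpos: "0 < M" unfolding M_def using e by (intro add_pos_pos) auto
  have c0: "0 < c0" "c0 < 1" using c0lt Mpos by (auto simp: c0_def M_def)
  define \<eta> where "\<eta> = ((1 / c0) powr (1 / (2 * l)) - 1) / 2"
  have ic0: "1 < 1 / c0" using c0 by simp
  have "(1 / c0) powr 0 < (1 / c0) powr (1 / (2 * l))"
    using ic0 l by (intro powr_less_mono) auto
  then have eta: "0 < \<eta>" unfolding \<eta>_def using c0 by simp
  define c where "c = M * (2 powr R * (1/2 + \<eta>)) powr l"
  have half_eta: "1/2 + \<eta> = (1 / c0) powr (1 / (2 * l)) / 2" unfolding \<eta>_def by (simp add: field_simps)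
  have "c = M * (2 powr (R - 1) * (1 / c0) powr (1 / (2 * l))) powr l"
    unfolding c_def half_eta by (simp add: powr_diff)
  also have "\<dots> = M * 2 powr (l * (R - 1)) * (1 / c0) powr (1/2)"
    using l c0 by (simp add: powr_mult powr_powr mult_ac)
  also have "\<dots> = c0 * (1 / c0) powr (1/2)" unfolding c0_def ..
  finally have ceq: "c = c0 * (1 / c0) powr (1/2)" .
  have "(1 / c0) powr (1/2) < (1 / c0) powr 1" using ic0 by (intro powr_less_mono) auto
  then have "c < c0 * (1 / c0)" unfolding ceq using c0 by (intro mult_strict_left_mono) auto
  then have c: "c < 1" "0 < c" using c0 unfolding ceq by auto
  define rr where "rr = \<bar>1 - 2 * \<rho>\<bar>"
  have rr: "0 \<le> rr" "rr < 1" unfolding rr_def using assms by auto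
  obtain m where m: "rr ^ m < 2 * \<eta>" using real_arch_pow_inv[of "2 * \<eta>" rr] eta rr by auto
  define W where "W = max 1 m"
  have W: "1 \<le> W" unfolding W_def by simp
  have rW: "rr ^ W \<le> 2 * \<eta>"
  proof -
    have "rr ^ W \<le> rr ^ m" using rr unfolding W_def by (intro power_decreasing) auto
    then show ?thesis using m by simp
  qed
  define qm where "qm = (1 - rr) / 2"
  have qm: "0 < qm" unfolding qm_def using rr by simp
  have Hq: "\<bar>qz \<rho> k z - 1/2\<bar> \<le> \<eta>" if z: "z \<in> Hz k W" for k z
  proof -
    have "qz \<rho> k z - 1/2 = - ((1 - 2 * \<rho>) ^ wt k z / 2)" unfolding qz_explicit by (simp add: field_simps)
    then have "\<bar>qz \<rho> k z - 1/2\<bar> = rr ^ wt k z / 2"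
      unfolding rr_def by (simp add: power_abs)
    also have "\<dots> \<le> rr ^ W / 2" using z rr by (auto simp: Hz_def intro!: power_decreasing)
    finally show ?thesis using rW by simp
  qed
  have Lq: "qm \<le> qz \<rho> k z" if z: "z \<in> Lz k W" for k z
  proof -
    have w: "1 \<le> wt k z" using z by (auto simp: Lz_def)
    have "\<bar>(1 - 2 * \<rho>) ^ wt k z\<bar> = rr ^ wt k z" unfolding rr_def by (simp add: power_abs)
    also have "\<dots> \<le> rr ^ 1" using w rr by (intro power_decreasing) auto
    finally have "(1 - 2 * \<rho>) ^ wt k z \<le> rr" by simp
    then show ?thesis unfolding qz_explicit qm_def by simp
  qed
  define B where "B = 2 * sqrt (\<epsilon> * (1 - \<epsilon>))"
  have B: "0 \<le> B" "B < 1"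
  proof -
    show "0 \<le> B" unfolding B_def using e by simp
    have "\<epsilon> - 1/2 \<noteq> 0" using assms by simp
    then have h: "0 < (\<epsilon> - 1/2) * (\<epsilon> - 1/2)" by (simp add: not_square_less_zero order_less_le)
    have "\<epsilon> * (1 - \<epsilon>) = (1/2)^2 - (\<epsilon> - 1/2) * (\<epsilon> - 1/2)" by (simp add: algebra_simps power2_eq_square)
    then have "\<epsilon> * (1 - \<epsilon>) < (1/2)^2" using h by linarith
    then have "sqrt (\<epsilon> * (1 - \<epsilon>)) < sqrt ((1/2)^2)" by (rule real_sqrt_less_mono)
    then show "B < 1" unfolding B_def by simp
  qed
  define \<theta> where "\<theta> = 1 - qm * (1 - B)"
  have qm1: "qm \<le> 1/2" unfolding qm_def using rr by simp
  have th: "0 < \<theta>" "\<theta> < 1"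
  proof -
    have "qm * (1 - B) \<le> 1/2 * 1" using qm qm1 B by (intro mult_mono) auto
    then show "0 < \<theta>" unfolding \<theta>_def by simp
    have "0 < qm * (1 - B)" using qm B by simp
    then show "\<theta> < 1" unfolding \<theta>_def by simp
  qed
  define f where "f = (\<lambda>n. real W * (R * real n + 1) ^ W * \<theta> ^ n + c ^ n)"
  have bound: "1 - expected_pc \<rho> \<epsilon> n (nat \<lfloor>R * real n\<rfloor>) \<le> f n" for n
  proof -
    define k where "k = nat \<lfloor>R * real n\<rfloor>"
    have kR: "real k \<le> R * real n" unfolding k_def using assms by simp
    have mb: "1 - expected_pc \<rho> \<epsilon> n k \<le> real (card (Lz k W)) * \<theta> ^ n + M ^ n * (2 ^ k * (1/2 + \<eta>) ^ n) powr l"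
      unfolding \<theta>_def B_def M_def
      by (rule main_bound[OF e r W l]) (use eta Hq Lq qm in auto)
    have t1: "real (card (Lz k W)) * \<theta> ^ n \<le> real W * (R * real n + 1) ^ W * \<theta> ^ n"
    proof -
      have "real (card (Lz k W)) \<le> real W * (real k + 1) ^ W" by (rule card_Lz)
      also have "\<dots> \<le> real W * (R * real n + 1) ^ W" using kR by (intro mult_left_mono power_mono) auto
      finally show ?thesis using th by (intro mult_right_mono) auto
    qed
    have t2: "M ^ n * (2 ^ k * (1/2 + \<eta>) ^ n) powr l \<le> c ^ n"
    proof -
      have b0: "0 < 2 powr R * (1/2 + \<eta>)" using eta by simp
      have "(2::real) ^ k = 2 powr real k" by (simp add: powr_realpow)
      also have "\<dots> \<le> 2 powr (R * real n)" using kR by (intro powr_mono) auto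
      also have "\<dots> = (2 powr R) ^ n" by (simp add: powr_powr[symmetric] powr_realpow)
      finally have "(2::real) ^ k * (1/2 + \<eta>) ^ n \<le> (2 powr R * (1/2 + \<eta>)) ^ n"
        using eta by (simp add: power_mult_distrib mult_right_mono)
      then have "(2 ^ k * (1/2 + \<eta>) ^ n) powr l \<le> ((2 powr R * (1/2 + \<eta>)) ^ n) powr l"
        using eta l by (intro powr_mono2) auto
      also have "\<dots> = ((2 powr R * (1/2 + \<eta>)) powr real n) powr l"
        using b0 by (simp add: powr_realpow)
      also have "\<dots> = ((2 powr R * (1/2 + \<eta>)) powr l) powr real n"
        by (simp add: powr_powr mult.commute)
      also have "\<dots> = ((2 powr R * (1/2 + \<eta>)) powr l) ^ n"
        by (rule powr_realpow) (use b0 eta in simp)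
      finally have "M ^ n * (2 ^ k * (1/2 + \<eta>) ^ n) powr l \<le> M ^ n * ((2 powr R * (1/2 + \<eta>)) powr l) ^ n"
        using Mpos by (intro mult_left_mono) auto
      also have "\<dots> = c ^ n" unfolding c_def by (simp add: power_mult_distrib)
      finally show ?thesis .
    qed
    show ?thesis using mb t1 t2 unfolding f_def k_def by linarith
  qed
  have nonneg: "0 \<le> 1 - expected_pc \<rho> \<epsilon> n (nat \<lfloor>R * real n\<rfloor>)" for n
    unfolding one_minus_expected[OF e r]
    using r Psi_nonneg[OF e] by (intro sum_nonneg mult_nonneg_nonneg bern_nonneg) auto
  have "f \<longlonglongrightarrow> 0" unfolding f_def using assms th c by (intro lim_test) auto
  have "(\<lambda>n. 1 - expected_pc \<rho> \<epsilon> n (nat \<lfloor>R * real n\<rfloor>)) \<longlonglongrightarrow> 0"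
  proof (rule tendsto_sandwich[of "\<lambda>_. 0" _ _ f])
    show "\<forall>\<^sub>F n in sequentially. 0 \<le> 1 - expected_pc \<rho> \<epsilon> n (nat \<lfloor>R * real n\<rfloor>)"
      using nonneg by (intro always_eventually) blast
    show "\<forall>\<^sub>F n in sequentially. 1 - expected_pc \<rho> \<epsilon> n (nat \<lfloor>R * real n\<rfloor>) \<le> f n"
      using bound by (intro always_eventually) blast
    show "(\<lambda>n. 0::real) \<longlonglongrightarrow> 0" by simp
    show "f \<longlonglongrightarrow> 0" by fact
  qed
  then have "(\<lambda>n. 1 - (1 - expected_pc \<rho> \<epsilon> n (nat \<lfloor>R * real n\<rfloor>))) \<longlonglongrightarrow> 1 - 0"
    by (intro tendsto_diff tendsto_const)
  then show ?thesis by simp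
qed

end
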